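(* Let $B_1,\dots,B_n$ be independent real-valued service times with finite means $\mu_i$, each with a distribution symmetric around its mean, and put $X_i=B_i-\mu_i$. Fix a sequence $\tau\in\mathsf S_n$ and use the mean-based schedule. Then for each $k\in\{1,\dots,n-1\}$, $$\mathbb EW_{k+1}\le\mathbb E\bigl(X_{\tau(1)}+\cdots+X_{\tau(k)}\bigr)^++\mathbb E\bigl(X_{\tau(1)}+\cdots+X_{\tau(k-1)}\bigr)^+,$$ with an empty sum equal to $0$.
   Context: Under sequence $\tau$ ($\tau(i)$ the patient in slot $i$) and the mean-based schedule (interarrival time after patient $j$ equal to $\mu_j$), the waiting times are $W_1=0$, $W_{i+1}=(W_i+X_{\tau(i)})^+$ with $a^+=\max\{0,a\}$. *)

theory Defs
  imports "HOL-Probability.Probability" "HOL-Combinatorics.Permutations"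
begin

text \<open>Waiting times under sequence tau with mean-based schedule:
  W_1 = 0, W_(i+1) = max 0 (W_i + X (tau i)). Slots are numbered 1..n;
  the value at index 0 is an unused dummy (set to 0).\<close>
fun waiting :: "(nat \<Rightarrow> real) \<Rightarrow> (nat \<Rightarrow> nat) \<Rightarrow> nat \<Rightarrow> real" where
  "waiting X tau 0 = 0"
| "waiting X tau (Suc 0) = 0"
| "waiting X tau (Suc (Suc i)) = max 0 (waiting X tau (Suc i) + X (tau (Suc i)))"

end

theory Submission
  imports Defs
begin


lemma (in prob_space) T1:
  fixes U V :: "'a \<Rightarrow> real" and f :: "real \<times> real \<Rightarrow> ennreal"
  assumes ind: "indep_var borel U borel V" and f: "f \<in> borel_measurable (borel \<Otimes>\<^sub>M borel)"
  shows "(\<integral>\<^sup>+\<omega>. f (U \<omega>, V \<omega>) \<partial>M) = (\<integral>\<^sup>+v. (\<integral>\<^sup>+\<omega>. f (U \<omega>, v) \<partial>M) \<partial>(distr M borel V))"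
proof -
  from ind[unfolded indep_var_distribution_eq] have rv: "random_variable borel U" "random_variable borel V"
    and eq: "distr M borel U \<Otimes>\<^sub>M distr M borel V = distr M (borel \<Otimes>\<^sub>M borel) (\<lambda>x. (U x, V x))" by auto
  interpret X: prob_space "distr M borel U" by (rule prob_space_distr) fact
  interpret Y: prob_space "distr M borel V" by (rule prob_space_distr) fact
  interpret XY: pair_prob_space "distr M borel U" "distr M borel V" ..
  have "(\<integral>\<^sup>+\<omega>. f (U \<omega>, V \<omega>) \<partial>M) = integral\<^sup>N (distr M (borel \<Otimes>\<^sub>M borel) (\<lambda>x. (U x, V x))) f"
    by (rule nn_integral_distr[symmetric]) (use rv f in auto)
  also have "\<dots> = integral\<^sup>N (distr M borel U \<Otimes>\<^sub>M distr M borel V) f" by (simp add: eq)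
  also have "\<dots> = (\<integral>\<^sup>+v. (\<integral>\<^sup>+u. f (u, v) \<partial>distr M borel U) \<partial>(distr M borel V))"
    by (rule XY.nn_integral_snd[symmetric]) (use f in simp)
  also have "\<dots> = (\<integral>\<^sup>+v. (\<integral>\<^sup>+\<omega>. f (U \<omega>, v) \<partial>M) \<partial>(distr M borel V))"
    by (intro nn_integral_cong nn_integral_distr) (use rv f in auto)
  finally show ?thesis .
qed


lemma waiting_tau: "waiting X tau m = waiting (\<lambda>i. X (tau i)) id m"
  by (induction X tau m rule: waiting.induct) auto
lemma waiting_cong: "(\<And>i. i \<in> {1..m} \<Longrightarrow> f i = g i) \<Longrightarrow> waiting f id (Suc m) = waiting g id (Suc m)"
  by (induction m) auto
lemma waiting_nonneg: "waiting f id m \<ge> 0"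
  by (induction f "id::nat\<Rightarrow>nat" m rule: waiting.induct) auto

lemma waiting_meas:
  assumes "tau ` {1..m} \<subseteq> A"
  shows "(\<lambda>f. waiting (\<lambda>i. f (tau i)) id (Suc m)) \<in> borel_measurable (PiM A (\<lambda>_. borel))"
  using assms
proof (induction m)
  case 0 then show ?case by simp
next
  case (Suc m)
  then have "tau ` {1..m} \<subseteq> A" "tau (Suc m) \<in> A" by auto
  with Suc.IH show ?case by simp
qed

lemma (in prob_space) indep_split:
  fixes X :: "nat \<Rightarrow> 'a \<Rightarrow> real"
  assumes ind: "indep_vars (\<lambda>_. borel) X I" and AI: "A \<subseteq> I" and j: "j \<in> I" "j \<notin> A"
    and g: "g \<in> borel_measurable (PiM A (\<lambda>_. borel))"
    and U: "\<And>\<omega>. U \<omega> = g (restrict (\<lambda>i. X i \<omega>) A)"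
  shows "indep_var borel U borel (X j)"
proof -
  have "indep_var (PiM A (\<lambda>_. borel)) (\<lambda>\<omega>. restrict (\<lambda>i. X i \<omega>) A) (PiM {j} (\<lambda>_. borel)) (\<lambda>\<omega>. restrict (\<lambda>i. X i \<omega>) {j})"
    by (rule indep_var_restrict[OF ind]) (use AI j in auto)
  then have "indep_var borel (g \<circ> (\<lambda>\<omega>. restrict (\<lambda>i. X i \<omega>) A))
     borel ((\<lambda>f. f j) \<circ> (\<lambda>\<omega>. restrict (\<lambda>i. X i \<omega>) {j}))"
    by (rule indep_var_compose) (use g in simp_all)
  also have "g \<circ> (\<lambda>\<omega>. restrict (\<lambda>i. X i \<omega>) A) = U" using U by (auto simp: fun_eq_iff)
  also have "((\<lambda>f. f j) \<circ> (\<lambda>\<omega>. restrict (\<lambda>i. X i \<omega>) {j})) = X j" by auto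
  finally show ?thesis .
qed

definition Wf :: "(nat \<Rightarrow> 'a \<Rightarrow> real) \<Rightarrow> (nat \<Rightarrow> nat) \<Rightarrow> nat \<Rightarrow> 'a \<Rightarrow> real" where
  "Wf X tau m \<omega> = waiting (\<lambda>i. X (tau i) \<omega>) id (Suc m)"
definition Sf :: "(nat \<Rightarrow> 'a \<Rightarrow> real) \<Rightarrow> (nat \<Rightarrow> nat) \<Rightarrow> nat \<Rightarrow> 'a \<Rightarrow> real" where
  "Sf X tau m \<omega> = (\<Sum>i=1..m. X (tau i) \<omega>)"

lemma Wf_0[simp]: "Wf X tau 0 \<omega> = 0" by (simp add: Wf_def)
lemma Wf_Suc: "Wf X tau (Suc m) \<omega> = max 0 (Wf X tau m \<omega> + X (tau (Suc m)) \<omega>)"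
  by (simp add: Wf_def)
lemma Wf_nonneg: "Wf X tau m \<omega> \<ge> 0" by (simp add: Wf_def waiting_nonneg)
lemma Sf_0[simp]: "Sf X tau 0 \<omega> = 0" by (simp add: Sf_def)
lemma Sf_Suc: "Sf X tau (Suc m) \<omega> = Sf X tau m \<omega> + X (tau (Suc m)) \<omega>"
  by (simp add: Sf_def)


lemma (in prob_space) indep_W:
  fixes X :: "nat \<Rightarrow> 'a \<Rightarrow> real"
  assumes ind: "indep_vars (\<lambda>_. borel) X I" and sub: "tau ` {1..N} \<subseteq> I" and inj: "inj_on tau {1..N}"
    and m: "Suc m \<le> N"
  shows "indep_var borel (Wf X tau m) borel (X (tau (Suc m)))"
    and "indep_var borel (Sf X tau m) borel (X (tau (Suc m)))"
proof -
  have A: "tau ` {1..m} \<subseteq> I" "tau (Suc m) \<in> I" "tau (Suc m) \<notin> tau ` {1..m}"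
  proof -
    show "tau ` {1..m} \<subseteq> I" using sub m by auto
    show "tau (Suc m) \<in> I" using sub m by auto
    show "tau (Suc m) \<notin> tau ` {1..m}"
    proof
      assume "tau (Suc m) \<in> tau ` {1..m}"
      then obtain i where i: "i \<in> {1..m}" "tau (Suc m) = tau i" by auto
      have "Suc m \<in> {1..N}" "i \<in> {1..N}" using i(1) m by auto
      with i(2) have "Suc m = i" using inj_onD[OF inj] by blast
      with i show False by auto
    qed
  qed
  show "indep_var borel (Wf X tau m) borel (X (tau (Suc m)))"
  proof (rule indep_split[OF ind A(1) A(2) A(3) waiting_meas[OF order_refl]])
    fix \<omega>
    show "Wf X tau m \<omega> = waiting (\<lambda>i. restrict (\<lambda>i. X i \<omega>) (tau ` {1..m}) (tau i)) id (Suc m)"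
      unfolding Wf_def by (rule waiting_cong) simp
  qed
  show "indep_var borel (Sf X tau m) borel (X (tau (Suc m)))"
  proof (rule indep_split[OF ind A(1) A(2) A(3), where g="\<lambda>f. \<Sum>i=1..m. f (tau i)"])
    show "(\<lambda>f. \<Sum>i=1..m. f (tau i)) \<in> borel_measurable (PiM (tau ` {1..m}) (\<lambda>_. borel::real measure))"
      by (rule borel_measurable_sum[where f="\<lambda>i f. f (tau i)"], rule measurable_component_singleton) auto
    fix \<omega>
    show "Sf X tau m \<omega> = (\<Sum>i=1..m. restrict (\<lambda>i. X i \<omega>) (tau ` {1..m}) (tau i))"
      unfolding Sf_def by (rule sum.cong) auto
  qed
qed



locale wsetup = prob_space +
  fixes X :: "nat \<Rightarrow> 'a \<Rightarrow> real" and tau :: "nat \<Rightarrow> nat" and N :: nat and I :: "nat set"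
  assumes ind: "indep_vars (\<lambda>_. borel) X I" and sub: "tau ` {1..N} \<subseteq> I" and inj: "inj_on tau {1..N}"
    and intg: "\<And>i. i \<in> {1..N} \<Longrightarrow> integrable M (X (tau i))"
    and symm: "\<And>i. i \<in> {1..N} \<Longrightarrow> distr M borel (X (tau i)) = distr M borel (\<lambda>\<omega>. - X (tau i) \<omega>)"
begin

lemma measX: "i \<in> {1..N} \<Longrightarrow> X (tau i) \<in> borel_measurable M"
  using intg by blast

lemma measW: "m \<le> N \<Longrightarrow> Wf X tau m \<in> borel_measurable M"
proof (induction m)
  case 0 then show ?case by (simp add: fun_eq_iff[symmetric] del: Wf_0) (simp add: Wf_def[abs_def])
next
  case (Suc m)
  have e: "Wf X tau (Suc m) = (\<lambda>\<omega>. max 0 (Wf X tau m \<omega> + X (tau (Suc m)) \<omega>))"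
    by (simp add: fun_eq_iff Wf_Suc)
  have [measurable]: "X (tau (Suc m)) \<in> borel_measurable M" using Suc.prems by (intro measX) auto
  have [measurable]: "Wf X tau m \<in> borel_measurable M" using Suc by auto
  show ?case unfolding e by measurable
qed

lemma measS: "m \<le> N \<Longrightarrow> Sf X tau m \<in> borel_measurable M"
  unfolding Sf_def[abs_def] by (rule borel_measurable_sum[where f="\<lambda>i. X (tau i)"]) (auto intro: measX)

lemma intS: "m \<le> N \<Longrightarrow> integrable M (Sf X tau m)"
  unfolding Sf_def[abs_def] by (rule Bochner_Integration.integrable_sum[where f="\<lambda>i. X (tau i)"]) (auto intro: intg)

lemma finS: "m \<le> N \<Longrightarrow> (\<integral>\<^sup>+\<omega>. ennreal (max 0 (Sf X tau m \<omega>)) \<partial>M) < \<infinity>"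
proof -
  assume m: "m \<le> N"
  have "(\<integral>\<^sup>+\<omega>. ennreal (max 0 (Sf X tau m \<omega>)) \<partial>M) = (\<integral>\<^sup>+\<omega>. ennreal (Sf X tau m \<omega>) \<partial>M)"
    by (intro nn_integral_cong) (simp add: max_def ennreal_neg)
  also have "\<dots> < \<infinity>" using integrableD(2)[OF intS[OF m]] by (simp add: less_top)
  finally show ?thesis .
qed

lemma symZ: "i \<in> {1..N} \<Longrightarrow> indep_var borel U borel (X (tau i)) \<Longrightarrow> indep_var borel U borel (\<lambda>\<omega>. - X (tau i) \<omega>)"
proof -
  assume "indep_var borel U borel (X (tau i))"
  from indep_var_compose[OF this, of id borel uminus borel]
  show ?thesis by (simp add: comp_def)
qed

lemma flip:
  fixes f :: "real \<times> real \<Rightarrow> ennreal"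
  assumes i: "i \<in> {1..N}" and ind: "indep_var borel U borel (X (tau i))"
    and f: "f \<in> borel_measurable (borel \<Otimes>\<^sub>M borel)"
  shows "(\<integral>\<^sup>+\<omega>. f (U \<omega>, - X (tau i) \<omega>) \<partial>M) = (\<integral>\<^sup>+\<omega>. f (U \<omega>, X (tau i) \<omega>) \<partial>M)"
  using T1[OF symZ[OF i ind] f] T1[OF ind f] symm[OF i] by simp

end

context wsetup begin

lemma symS:
  fixes g :: "real \<Rightarrow> ennreal"
  assumes "m \<le> N" "g \<in> borel_measurable borel"
  shows "(\<integral>\<^sup>+\<omega>. g (Sf X tau m \<omega>) \<partial>M) = (\<integral>\<^sup>+\<omega>. g (- Sf X tau m \<omega>) \<partial>M)"
  using assms
proof (induction m arbitrary: g)
  case 0 then show ?case by simp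
next
  case (Suc m)
  note g[measurable] = Suc.prems(2)
  let ?Z = "X (tau (Suc m))"
  have i: "Suc m \<in> {1..N}" using Suc.prems by auto
  have indS: "indep_var borel (Sf X tau m) borel ?Z"
    using indep_W(2)[OF ind sub inj Suc.prems(1)] .
  have "(\<integral>\<^sup>+\<omega>. g (Sf X tau (Suc m) \<omega>) \<partial>M) = (\<integral>\<^sup>+\<omega>. g (Sf X tau m \<omega> + ?Z \<omega>) \<partial>M)"
    by (simp add: Sf_Suc)
  also have "\<dots> = (\<integral>\<^sup>+v. (\<integral>\<^sup>+\<omega>. g (Sf X tau m \<omega> + v) \<partial>M) \<partial>distr M borel ?Z)"
    using T1[OF indS, of "\<lambda>(u,v). g (u+v)"] by simp
  also have "\<dots> = (\<integral>\<^sup>+v. (\<integral>\<^sup>+\<omega>. g (- Sf X tau m \<omega> + v) \<partial>M) \<partial>distr M borel ?Z)"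
  proof (rule nn_integral_cong)
    fix v
    show "(\<integral>\<^sup>+\<omega>. g (Sf X tau m \<omega> + v) \<partial>M) = (\<integral>\<^sup>+\<omega>. g (- Sf X tau m \<omega> + v) \<partial>M)"
      using Suc.IH[of "\<lambda>s. g (s + v)"] Suc.prems by simp
  qed
  also have "\<dots> = (\<integral>\<^sup>+v. (\<integral>\<^sup>+\<omega>. g (- Sf X tau m \<omega> + v) \<partial>M) \<partial>distr M borel (\<lambda>\<omega>. - ?Z \<omega>))"
    using symm[OF i] by simp
  also have "\<dots> = (\<integral>\<^sup>+\<omega>. g (- ?Z \<omega> - Sf X tau m \<omega>) \<partial>M)"
    using T1[OF symZ[OF i indS], of "\<lambda>(u,v). g (v - u)"] by simp
  also have "\<dots> = (\<integral>\<^sup>+\<omega>. g (- Sf X tau (Suc m) \<omega>) \<partial>M)"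
    by (intro nn_integral_cong arg_cong[where f=g]) (simp add: Sf_Suc)
  finally show ?case .
qed

lemma identI:
  assumes m: "m \<le> N" and b: "b \<ge> 0"
  shows "(\<integral>\<^sup>+\<omega>. ennreal (max 0 (Sf X tau m \<omega> + b)) \<partial>M)
       = ennreal b + (\<integral>\<^sup>+\<omega>. ennreal (max 0 (Sf X tau m \<omega> - b)) \<partial>M)"
proof -
  note S[measurable] = measS[OF m]
  let ?S = "Sf X tau m"
  have 1: "(\<integral>\<^sup>+\<omega>. ennreal (max 0 (?S \<omega> + b)) \<partial>M) = (\<integral>\<^sup>+\<omega>. ennreal (max 0 (b - ?S \<omega>)) \<partial>M)"
    using symS[OF m, of "\<lambda>s. ennreal (max 0 (s + b))"] by simp
  have 2: "(\<integral>\<^sup>+\<omega>. ennreal (max 0 (?S \<omega>)) \<partial>M) = (\<integral>\<^sup>+\<omega>. ennreal (max 0 (- ?S \<omega>)) \<partial>M)"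
    using symS[OF m, of "\<lambda>s. ennreal (max 0 s)"] by simp
  have cancel: "\<And>a c p::ennreal. a + p = c + p \<Longrightarrow> p \<noteq> \<infinity> \<Longrightarrow> a = c"
    by (metis add.commute ennreal_add_left_cancel)
  have pw: "ennreal (max 0 (b - s)) + ennreal (max 0 s) = ennreal b + (ennreal (max 0 (s - b)) + ennreal (max 0 (- s)))" for s
  proof -
    have "ennreal (max 0 (b - s)) + ennreal (max 0 s) = ennreal (max 0 (b - s) + max 0 s)"
      by (simp add: ennreal_plus)
    also have "\<dots> = ennreal (b + (max 0 (s - b) + max 0 (- s)))"
      using b by (intro arg_cong[where f=ennreal]) (auto simp: max_def)
    also have "\<dots> = ennreal b + (ennreal (max 0 (s - b)) + ennreal (max 0 (- s)))"
      using b by (simp add: ennreal_plus)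
    finally show ?thesis .
  qed
  have "(\<integral>\<^sup>+\<omega>. ennreal (max 0 (b - ?S \<omega>)) \<partial>M) + (\<integral>\<^sup>+\<omega>. ennreal (max 0 (?S \<omega>)) \<partial>M)
      = (\<integral>\<^sup>+\<omega>. ennreal (max 0 (b - ?S \<omega>)) + ennreal (max 0 (?S \<omega>)) \<partial>M)"
    by (rule nn_integral_add[symmetric]) measurable
  also have "\<dots> = (\<integral>\<^sup>+\<omega>. ennreal b + (ennreal (max 0 (?S \<omega> - b)) + ennreal (max 0 (- ?S \<omega>))) \<partial>M)"
    by (simp only: pw)
  also have "\<dots> = ennreal b + ((\<integral>\<^sup>+\<omega>. ennreal (max 0 (?S \<omega> - b)) \<partial>M) + (\<integral>\<^sup>+\<omega>. ennreal (max 0 (- ?S \<omega>)) \<partial>M))"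
    by (subst nn_integral_add, measurable, subst nn_integral_add, measurable) (simp add: emeasure_space_1)
  also have "\<dots> = (ennreal b + (\<integral>\<^sup>+\<omega>. ennreal (max 0 (?S \<omega> - b)) \<partial>M)) + (\<integral>\<^sup>+\<omega>. ennreal (max 0 (?S \<omega>)) \<partial>M)"
    by (simp only: 2 add.assoc)
  finally have "(\<integral>\<^sup>+\<omega>. ennreal (max 0 (b - ?S \<omega>)) \<partial>M) + (\<integral>\<^sup>+\<omega>. ennreal (max 0 (?S \<omega>)) \<partial>M)
     = (ennreal b + (\<integral>\<^sup>+\<omega>. ennreal (max 0 (?S \<omega> - b)) \<partial>M)) + (\<integral>\<^sup>+\<omega>. ennreal (max 0 (?S \<omega>)) \<partial>M)" .
  then have "(\<integral>\<^sup>+\<omega>. ennreal (max 0 (b - ?S \<omega>)) \<partial>M) = ennreal b + (\<integral>\<^sup>+\<omega>. ennreal (max 0 (?S \<omega> - b)) \<partial>M)"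
  proof (rule cancel)
    show "(\<integral>\<^sup>+\<omega>. ennreal (max 0 (?S \<omega>)) \<partial>M) \<noteq> \<infinity>" using finS[OF m] by (simp only: less_top)
  qed
  with 1 show ?thesis by simp
qed

end

context wsetup begin

lemma two_le: "(a::ennreal) \<le> 2 * a"
  by (simp add: mult_2 add_increasing)

lemma levy:
  assumes "m \<le> N"
  shows "(\<integral>\<^sup>+\<omega>. ennreal (max 0 (Wf X tau m \<omega> - c)) \<partial>M)
       \<le> 2 * (\<integral>\<^sup>+\<omega>. ennreal (max 0 (Sf X tau m \<omega> - c)) \<partial>M)"
  using assms
proof (induction m arbitrary: c)
  case 0 then show ?case by (simp add: two_le)
next
  case (Suc m)
  let ?Z = "X (tau (Suc m))"
  have i: "Suc m \<in> {1..N}" using Suc.prems by auto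
  have mN: "m \<le> N" using Suc.prems by auto
  note [measurable] = measS[OF mN] measW[OF mN] measX[OF i] measS[OF Suc.prems] measW[OF Suc.prems]
  have indS: "indep_var borel (Sf X tau m) borel ?Z"
    using indep_W(2)[OF ind sub inj Suc.prems(1)] .
  have indW: "indep_var borel (Wf X tau m) borel ?Z"
    using indep_W(1)[OF ind sub inj Suc.prems(1)] .
  have pos: "(\<integral>\<^sup>+\<omega>. ennreal (max 0 (Wf X tau (Suc m) \<omega> - a)) \<partial>M)
       \<le> 2 * (\<integral>\<^sup>+\<omega>. ennreal (max 0 (Sf X tau (Suc m) \<omega> - a)) \<partial>M)" if a: "a \<ge> 0" for a
  proof -
    have "(\<integral>\<^sup>+\<omega>. ennreal (max 0 (Wf X tau (Suc m) \<omega> - a)) \<partial>M)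
        = (\<integral>\<^sup>+\<omega>. ennreal (max 0 (Wf X tau m \<omega> + ?Z \<omega> - a)) \<partial>M)"
      using a by (intro nn_integral_cong arg_cong[where f=ennreal]) (auto simp: Wf_Suc max_def)
    also have "\<dots> = (\<integral>\<^sup>+v. (\<integral>\<^sup>+\<omega>. ennreal (max 0 (Wf X tau m \<omega> + v - a)) \<partial>M) \<partial>distr M borel ?Z)"
      using T1[OF indW, of "\<lambda>(u,v). ennreal (max 0 (u + v - a))"] by simp
    also have "\<dots> \<le> (\<integral>\<^sup>+v. (\<integral>\<^sup>+\<omega>. 2 * ennreal (max 0 (Sf X tau m \<omega> + v - a)) \<partial>M) \<partial>distr M borel ?Z)"
    proof (rule nn_integral_mono)
      fix v
      have "(\<integral>\<^sup>+\<omega>. ennreal (max 0 (Wf X tau m \<omega> + v - a)) \<partial>M)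
          = (\<integral>\<^sup>+\<omega>. ennreal (max 0 (Wf X tau m \<omega> - (a - v))) \<partial>M)"
        by (simp add: algebra_simps)
      also have "\<dots> \<le> 2 * (\<integral>\<^sup>+\<omega>. ennreal (max 0 (Sf X tau m \<omega> - (a - v))) \<partial>M)"
        by (rule Suc.IH[OF mN])
      also have "\<dots> = (\<integral>\<^sup>+\<omega>. 2 * ennreal (max 0 (Sf X tau m \<omega> + v - a)) \<partial>M)"
        by (subst nn_integral_cmult) (measurable, simp add: algebra_simps)
      finally show "(\<integral>\<^sup>+\<omega>. ennreal (max 0 (Wf X tau m \<omega> + v - a)) \<partial>M)
          \<le> (\<integral>\<^sup>+\<omega>. 2 * ennreal (max 0 (Sf X tau m \<omega> + v - a)) \<partial>M)" .
    qed
    also have "\<dots> = (\<integral>\<^sup>+\<omega>. 2 * ennreal (max 0 (Sf X tau m \<omega> + ?Z \<omega> - a)) \<partial>M)"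
      using T1[OF indS, of "\<lambda>(u,v). 2 * ennreal (max 0 (u + v - a))"] by simp
    also have "\<dots> = 2 * (\<integral>\<^sup>+\<omega>. ennreal (max 0 (Sf X tau (Suc m) \<omega> - a)) \<partial>M)"
      by (subst nn_integral_cmult[symmetric]) (measurable, simp add: Sf_Suc)
    finally show ?thesis .
  qed
  show ?case
  proof (cases "c \<ge> 0")
    case True then show ?thesis by (rule pos)
  next
    case False
    define b where "b = - c"
    have b: "b \<ge> 0" using False by (simp add: b_def)
    have "(\<integral>\<^sup>+\<omega>. ennreal (max 0 (Wf X tau (Suc m) \<omega> - c)) \<partial>M)
       \<le> (\<integral>\<^sup>+\<omega>. ennreal (2 * b) + ennreal (max 0 (Wf X tau (Suc m) \<omega> - b)) \<partial>M)"
    proof (rule nn_integral_mono)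
      fix \<omega>
      have w: "Wf X tau (Suc m) \<omega> \<ge> 0" by (rule Wf_nonneg)
      have "ennreal (max 0 (Wf X tau (Suc m) \<omega> - c)) \<le> ennreal (2 * b + max 0 (Wf X tau (Suc m) \<omega> - b))"
        using w b by (intro ennreal_leI) (auto simp: b_def max_def)
      also have "\<dots> = ennreal (2 * b) + ennreal (max 0 (Wf X tau (Suc m) \<omega> - b))"
        using b by (intro ennreal_plus) auto
      finally show "ennreal (max 0 (Wf X tau (Suc m) \<omega> - c)) \<le> ennreal (2 * b) + ennreal (max 0 (Wf X tau (Suc m) \<omega> - b))" .
    qed
    also have "\<dots> = ennreal (2 * b) + (\<integral>\<^sup>+\<omega>. ennreal (max 0 (Wf X tau (Suc m) \<omega> - b)) \<partial>M)"
      by (subst nn_integral_add) (measurable, simp add: emeasure_space_1)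
    also have "\<dots> \<le> ennreal (2 * b) + 2 * (\<integral>\<^sup>+\<omega>. ennreal (max 0 (Sf X tau (Suc m) \<omega> - b)) \<partial>M)"
      using pos[OF b] by (rule add_left_mono)
    also have "\<dots> = 2 * (ennreal b + (\<integral>\<^sup>+\<omega>. ennreal (max 0 (Sf X tau (Suc m) \<omega> - b)) \<partial>M))"
      using b by (simp add: distrib_left ennreal_mult)
    also have "\<dots> = 2 * (\<integral>\<^sup>+\<omega>. ennreal (max 0 (Sf X tau (Suc m) \<omega> + b)) \<partial>M)"
      using identI[OF Suc.prems b] by simp
    also have "\<dots> = 2 * (\<integral>\<^sup>+\<omega>. ennreal (max 0 (Sf X tau (Suc m) \<omega> - c)) \<partial>M)"
      by (simp add: b_def)
    finally show ?thesis .
  qed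
qed

end

context wsetup begin

lemma final:
  assumes mN: "Suc m \<le> N"
  shows "(\<integral>\<^sup>+\<omega>. ennreal (Wf X tau (Suc m) \<omega>) \<partial>M)
     \<le> (\<integral>\<^sup>+\<omega>. ennreal (max 0 (Sf X tau (Suc m) \<omega>)) \<partial>M) + (\<integral>\<^sup>+\<omega>. ennreal (max 0 (Sf X tau m \<omega>)) \<partial>M)"
proof -
  let ?Z = "X (tau (Suc m))"
  let ?W = "Wf X tau m" and ?S = "Sf X tau m"
  let ?C = "\<integral>\<^sup>+\<omega>. ennreal (max 0 (?S \<omega>)) \<partial>M"
  have i: "Suc m \<in> {1..N}" using mN by auto
  have m: "m \<le> N" using mN by auto
  note [measurable] = measS[OF m] measW[OF m] measX[OF i]
  have indS: "indep_var borel ?S borel ?Z"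
    using indep_W(2)[OF ind sub inj mN] .
  have indW: "indep_var borel ?W borel ?Z"
    using indep_W(1)[OF ind sub inj mN] .
  define G where "G = (\<lambda>(u::real,v::real). ennreal (max 0 (u+v)) + ennreal (max 0 (u-v)))"
  define H where "H = (\<lambda>(u::real,v::real). ennreal (max 0 (u+v)) + ennreal (max 0 (u-v)) + 2 * ennreal (max 0 u))"
  have [measurable]: "G \<in> borel_measurable (borel \<Otimes>\<^sub>M borel)" unfolding G_def by measurable
  have [measurable]: "H \<in> borel_measurable (borel \<Otimes>\<^sub>M borel)" unfolding H_def by measurable
  have eW: "(\<integral>\<^sup>+\<omega>. ennreal (max 0 (?W \<omega> - ?Z \<omega>)) \<partial>M) = (\<integral>\<^sup>+\<omega>. ennreal (max 0 (?W \<omega> + ?Z \<omega>)) \<partial>M)"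
    using flip[OF i indW, of "\<lambda>(u,v). ennreal (max 0 (u+v))"] by simp
  have eS: "(\<integral>\<^sup>+\<omega>. ennreal (max 0 (?S \<omega> - ?Z \<omega>)) \<partial>M) = (\<integral>\<^sup>+\<omega>. ennreal (max 0 (?S \<omega> + ?Z \<omega>)) \<partial>M)"
    using flip[OF i indS, of "\<lambda>(u,v). ennreal (max 0 (u+v))"] by simp
  have keya: "(\<integral>\<^sup>+\<omega>. G (?W \<omega>, a) \<partial>M) \<le> (\<integral>\<^sup>+\<omega>. H (?S \<omega>, a) \<partial>M)" if a: "a \<ge> 0" for a
  proof -
    have "(\<integral>\<^sup>+\<omega>. G (?W \<omega>, a) \<partial>M) = (\<integral>\<^sup>+\<omega>. ennreal (max 0 (?W \<omega> - 0)) + ennreal a + ennreal (max 0 (?W \<omega> - a)) \<partial>M)"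
    proof (rule nn_integral_cong)
      fix \<omega>
      have "?W \<omega> \<ge> 0" by (rule Wf_nonneg)
      then show "G (?W \<omega>, a) = ennreal (max 0 (?W \<omega> - 0)) + ennreal a + ennreal (max 0 (?W \<omega> - a))"
        using a by (simp add: G_def max_absorb2 ennreal_plus)
    qed
    also have "\<dots> = (\<integral>\<^sup>+\<omega>. ennreal (max 0 (?W \<omega> - 0)) \<partial>M) + ennreal a + (\<integral>\<^sup>+\<omega>. ennreal (max 0 (?W \<omega> - a)) \<partial>M)"
      by ((subst nn_integral_add; (measurable)?), (subst nn_integral_add; (measurable)?)) (simp_all add: emeasure_space_1)
    also have "\<dots> \<le> 2 * (\<integral>\<^sup>+\<omega>. ennreal (max 0 (?S \<omega> - 0)) \<partial>M) + ennreal a + 2 * (\<integral>\<^sup>+\<omega>. ennreal (max 0 (?S \<omega> - a)) \<partial>M)"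
      by (intro add_mono levy[OF m] order_refl)
    also have "\<dots> = ((ennreal a + (\<integral>\<^sup>+\<omega>. ennreal (max 0 (?S \<omega> - a)) \<partial>M)) + (\<integral>\<^sup>+\<omega>. ennreal (max 0 (?S \<omega> - a)) \<partial>M)) + 2 * ?C"
      by (simp add: mult_2 ac_simps)
    also have "\<dots> = (\<integral>\<^sup>+\<omega>. ennreal (max 0 (?S \<omega> + a)) \<partial>M) + (\<integral>\<^sup>+\<omega>. ennreal (max 0 (?S \<omega> - a)) \<partial>M) + 2 * ?C"
      by (simp only: identI[OF m a])
    also have "\<dots> = (\<integral>\<^sup>+\<omega>. H (?S \<omega>, a) \<partial>M)"
      unfolding H_def
      by (simp only: case_prod_conv, (subst nn_integral_add; (measurable)?), (subst nn_integral_add; (measurable)?),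
          (subst nn_integral_cmult; (measurable)?))
    finally show ?thesis .
  qed
  have key: "(\<integral>\<^sup>+\<omega>. G (?W \<omega>, v) \<partial>M) \<le> (\<integral>\<^sup>+\<omega>. H (?S \<omega>, v) \<partial>M)" for v
  proof (cases "v \<ge> 0")
    case True then show ?thesis by (rule keya)
  next
    case False
    have "(\<integral>\<^sup>+\<omega>. G (?W \<omega>, v) \<partial>M) = (\<integral>\<^sup>+\<omega>. G (?W \<omega>, -v) \<partial>M)"
      by (intro nn_integral_cong) (simp add: G_def ac_simps)
    also have "\<dots> \<le> (\<integral>\<^sup>+\<omega>. H (?S \<omega>, -v) \<partial>M)" using False by (intro keya) auto
    also have "\<dots> = (\<integral>\<^sup>+\<omega>. H (?S \<omega>, v) \<partial>M)"
      by (intro nn_integral_cong) (simp add: H_def ac_simps)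
    finally show ?thesis .
  qed
  have "2 * (\<integral>\<^sup>+\<omega>. ennreal (Wf X tau (Suc m) \<omega>) \<partial>M)
      = (\<integral>\<^sup>+\<omega>. ennreal (max 0 (?W \<omega> + ?Z \<omega>)) \<partial>M) + (\<integral>\<^sup>+\<omega>. ennreal (max 0 (?W \<omega> - ?Z \<omega>)) \<partial>M)"
    by (simp only: eW mult_2 Wf_Suc)
  also have "\<dots> = (\<integral>\<^sup>+\<omega>. G (?W \<omega>, ?Z \<omega>) \<partial>M)"
    unfolding G_def by (simp only: case_prod_conv, (subst nn_integral_add; (measurable)?))
  also have "\<dots> = (\<integral>\<^sup>+v. (\<integral>\<^sup>+\<omega>. G (?W \<omega>, v) \<partial>M) \<partial>distr M borel ?Z)"
    by (rule T1[OF indW]) measurable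
  also have "\<dots> \<le> (\<integral>\<^sup>+v. (\<integral>\<^sup>+\<omega>. H (?S \<omega>, v) \<partial>M) \<partial>distr M borel ?Z)"
    by (intro nn_integral_mono key)
  also have "\<dots> = (\<integral>\<^sup>+\<omega>. H (?S \<omega>, ?Z \<omega>) \<partial>M)"
    by (rule T1[OF indS, symmetric]) measurable
  also have "\<dots> = (\<integral>\<^sup>+\<omega>. ennreal (max 0 (?S \<omega> + ?Z \<omega>)) \<partial>M) + (\<integral>\<^sup>+\<omega>. ennreal (max 0 (?S \<omega> - ?Z \<omega>)) \<partial>M) + 2 * ?C"
    unfolding H_def
    by (simp only: case_prod_conv, (subst nn_integral_add; (measurable)?), (subst nn_integral_add; (measurable)?),
        (subst nn_integral_cmult; (measurable)?))
  also have "\<dots> = 2 * ((\<integral>\<^sup>+\<omega>. ennreal (max 0 (Sf X tau (Suc m) \<omega>)) \<partial>M) + ?C)"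
    by (simp only: eS mult_2 Sf_Suc distrib_left ac_simps)
  finally show ?thesis
    by (subst (asm) ennreal_mult_le_mult_iff) auto
qed

end


theorem lemma3p3:
  fixes M :: "'a measure" and B :: "nat \<Rightarrow> 'a \<Rightarrow> real"
    and n k :: nat and tau :: "nat \<Rightarrow> nat"
  assumes "prob_space M"
    and "prob_space.indep_vars M (\<lambda>_. borel) B {1..n}"
    and "\<And>i. i \<in> {1..n} \<Longrightarrow> integrable M (B i)"
    and "\<And>i. i \<in> {1..n} \<Longrightarrow>
           distr M borel (\<lambda>\<omega>. B i \<omega> - integral\<^sup>L M (B i))
         = distr M borel (\<lambda>\<omega>. - (B i \<omega> - integral\<^sup>L M (B i)))"
    and "tau permutes {1..n}"
    and "1 \<le> k" and "k \<le> n - 1"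
  shows "integral\<^sup>L M (\<lambda>\<omega>. waiting (\<lambda>j. B j \<omega> - integral\<^sup>L M (B j)) tau (k + 1))
         \<le> integral\<^sup>L M (\<lambda>\<omega>. max 0 (\<Sum>i=1..k. B (tau i) \<omega> - integral\<^sup>L M (B (tau i))))
          + integral\<^sup>L M (\<lambda>\<omega>. max 0 (\<Sum>i=1..k-1. B (tau i) \<omega> - integral\<^sup>L M (B (tau i))))"
proof -
  interpret prob_space M by (rule assms(1))
  define X where "X = (\<lambda>j \<omega>. B j \<omega> - integral\<^sup>L M (B j))"
  have kn: "k < n" using assms(6,7) by linarith
  have indX: "indep_vars (\<lambda>_. borel) X {1..n}"
    using indep_vars_compose2[OF assms(2), of "\<lambda>i x. x - integral\<^sup>L M (B i)" "\<lambda>_. borel"]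
    by (simp add: X_def)
  have tauin: "tau i \<in> {1..n}" if "i \<in> {1..k}" for i
    using permutes_in_image[OF assms(5)] that kn by auto
  interpret W: wsetup M X tau k "{1..n}"
  proof
    show "indep_vars (\<lambda>_. borel) X {1..n}" by (rule indX)
    show "tau ` {1..k} \<subseteq> {1..n}" using tauin by auto
    show "inj_on tau {1..k}" using permutes_inj_on[OF assms(5)] .
    fix i assume i: "i \<in> {1..k}"
    show "integrable M (X (tau i))"
      unfolding X_def using assms(3)[OF tauin[OF i]] by simp
    show "distr M borel (X (tau i)) = distr M borel (\<lambda>\<omega>. - X (tau i) \<omega>)"
      unfolding X_def using assms(4)[OF tauin[OF i]] by simp
  qed
  obtain m where km: "k = Suc m" using assms(6) by (cases k) auto
  have fin: "(\<integral>\<^sup>+\<omega>. ennreal (Wf X tau (Suc m) \<omega>) \<partial>M)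
     \<le> (\<integral>\<^sup>+\<omega>. ennreal (max 0 (Sf X tau (Suc m) \<omega>)) \<partial>M) + (\<integral>\<^sup>+\<omega>. ennreal (max 0 (Sf X tau m \<omega>)) \<partial>M)"
    using W.final[of m] km by simp
  have e1: "(\<lambda>\<omega>. waiting (\<lambda>j. B j \<omega> - integral\<^sup>L M (B j)) tau (k + 1)) = Wf X tau (Suc m)"
    by (auto simp: fun_eq_iff Wf_def X_def km waiting_tau[of _ tau])
  have e2: "(\<lambda>\<omega>. max 0 (\<Sum>i=1..k. B (tau i) \<omega> - integral\<^sup>L M (B (tau i)))) = (\<lambda>\<omega>. max 0 (Sf X tau (Suc m) \<omega>))"
    by (auto simp: fun_eq_iff Sf_def X_def km)
  have e3: "(\<lambda>\<omega>. max 0 (\<Sum>i=1..k-1. B (tau i) \<omega> - integral\<^sup>L M (B (tau i)))) = (\<lambda>\<omega>. max 0 (Sf X tau m \<omega>))"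
    by (auto simp: fun_eq_iff Sf_def X_def km)
  have mk: "m \<le> k" "Suc m \<le> k" using km by auto
  note [measurable] = W.measW[OF mk(2)] W.measS[OF mk(1)] W.measS[OF mk(2)]
  have i1: "integral\<^sup>L M (Wf X tau (Suc m)) = enn2real (\<integral>\<^sup>+\<omega>. ennreal (Wf X tau (Suc m) \<omega>) \<partial>M)"
    by (rule integral_eq_nn_integral) (auto simp: Wf_nonneg)
  have i2: "integral\<^sup>L M (\<lambda>\<omega>. max 0 (Sf X tau (Suc m) \<omega>)) = enn2real (\<integral>\<^sup>+\<omega>. ennreal (max 0 (Sf X tau (Suc m) \<omega>)) \<partial>M)"
    by (rule integral_eq_nn_integral) auto
  have i3: "integral\<^sup>L M (\<lambda>\<omega>. max 0 (Sf X tau m \<omega>)) = enn2real (\<integral>\<^sup>+\<omega>. ennreal (max 0 (Sf X tau m \<omega>)) \<partial>M)"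
    by (rule integral_eq_nn_integral) auto
  have f2: "(\<integral>\<^sup>+\<omega>. ennreal (max 0 (Sf X tau (Suc m) \<omega>)) \<partial>M) < top" using W.finS[OF mk(2)] by simp
  have f3: "(\<integral>\<^sup>+\<omega>. ennreal (max 0 (Sf X tau m \<omega>)) \<partial>M) < top" using W.finS[OF mk(1)] by simp
  have "enn2real (\<integral>\<^sup>+\<omega>. ennreal (Wf X tau (Suc m) \<omega>) \<partial>M)
      \<le> enn2real ((\<integral>\<^sup>+\<omega>. ennreal (max 0 (Sf X tau (Suc m) \<omega>)) \<partial>M) + (\<integral>\<^sup>+\<omega>. ennreal (max 0 (Sf X tau m \<omega>)) \<partial>M))"
    by (rule enn2real_mono[OF fin]) (use f2 f3 in simp)
  also have "\<dots> = enn2real (\<integral>\<^sup>+\<omega>. ennreal (max 0 (Sf X tau (Suc m) \<omega>)) \<partial>M) + enn2real (\<integral>\<^sup>+\<omega>. ennreal (max 0 (Sf X tau m \<omega>)) \<partial>M)"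
    by (rule enn2real_plus[OF f2 f3])
  finally show ?thesis
    unfolding e1 e2 e3 i1 i2 i3 .
qed


end
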